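(* Let $\mathcal L\in\mathbb{R}^{n_1\times r\times n_3}$, $\mathcal R\in\mathbb{R}^{n_2\times r\times n_3}$ satisfy $\mathcal L^\top*\mathcal L=\mathcal R^\top*\mathcal R$, and let $\mathcal X=\mathcal L*\mathcal R^\top$. Let $\mathcal X_\star=\mathcal U_\star*\mathcal S_\star*\mathcal V_\star^\top$ be a compact t-SVD of $\mathcal X_\star\in\mathbb{R}^{n_1\times n_2\times n_3}$ with tubal rank $r_\star$, and set $\mathcal L_\star=\mathcal U_\star*\mathcal S_\star^{1/2}$, $\mathcal R_\star=\mathcal V_\star*\mathcal S_\star^{1/2}$, $\mathcal F=\begin{bmatrix}\mathcal L\\ \mathcal R\end{bmatrix}$, $\mathcal F_\star=\begin{bmatrix}\mathcal L_\star\\ \mathcal R_\star\end{bmatrix}$. Then $$\|\mathcal F*\mathcal F^\top-\mathcal F_\star*\mathcal F_\star^\top\|_F\le2\|\mathcal X-\mathcal X_\star\|_F.$$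
   Context: For $\mathcal{A}\in\mathbb{R}^{n_1\times n_2\times n_3}$, $\bar{\mathcal A}$ is its discrete Fourier transform along the third mode with frontal slices $\bar A^{(k)}$. The t-product $\mathcal A*\mathcal B$ has Fourier slices $\bar A^{(k)}\bar B^{(k)}$; $\mathcal A^\top$ has Fourier slices $(\bar A^{(k)})^H$; $\mathcal I$ has first frontal slice the identity matrix and the rest zero. $\|\cdot\|_F$ is the entrywise Frobenius norm. Stacking $\begin{bmatrix}\mathcal L\\ \mathcal R\end{bmatrix}\in\mathbb{R}^{(n_1+n_2)\times r\times n_3}$ is along the first mode. A compact t-SVD $\mathcal X_\star=\mathcal U_\star*\mathcal S_\star*\mathcal V_\star^\top$ has $\mathcal U_\star\in\mathbb{R}^{n_1\times r_\star\times n_3}$, $\mathcal V_\star\in\mathbb{R}^{n_2\times r_\star\times n_3}$ with $\mathcal U_\star^\top*\mathcal U_\star=\mathcal V_\star^\top*\mathcal V_\star=\mathcal I$, and $\mathcal S_\star\in\mathbb{R}^{r_\star\times r_\star\times n_3}$ whose Fourier slices are diagonal with nonnegative entries; $\mathcal S_\star^{1/2}$ has Fourier slices the entrywise square roots. Tubal rank $=\max_k\mathrm{rank}(\bar A^{(k)})$. *)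

theory Defs
  imports "HOL-Analysis.Analysis" "Jordan_Normal_Form.DL_Rank"
begin

text \<open>Third-order real tensors of size n1 x n2 x n3 are represented as functions
  nat => nat => nat => real, indices 0-based; only entries inside the index box matter.\<close>
type_synonym tensor = "nat \<Rightarrow> nat \<Rightarrow> nat \<Rightarrow> real"

definition teq :: "nat \<Rightarrow> nat \<Rightarrow> nat \<Rightarrow> tensor \<Rightarrow> tensor \<Rightarrow> bool" where
  "teq n1 n2 n3 A B \<longleftrightarrow> (\<forall>i<n1. \<forall>j<n2. \<forall>k<n3. A i j k = B i j k)"

definition tdft :: "nat \<Rightarrow> tensor \<Rightarrow> nat \<Rightarrow> nat \<Rightarrow> nat \<Rightarrow> complex" where
  "tdft n3 A i j k = (\<Sum>t<n3. complex_of_real (A i j t) * cis (- 2 * pi * real k * real t / real n3))"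

text \<open>t-product of A (n1 x m x n3) and B (m x n2 x n3): circular convolution of frontal
  slices, i.e. the tensor whose Fourier slices are the products of Fourier slices.\<close>
definition tprod :: "nat \<Rightarrow> nat \<Rightarrow> tensor \<Rightarrow> tensor \<Rightarrow> tensor" where
  "tprod n3 m A B = (\<lambda>i j k. \<Sum>l<m. \<Sum>t<n3. A i l t * B l j ((k + n3 - t) mod n3))"

text \<open>Tensor transpose: Fourier slices are conjugate transposes.\<close>
definition ttrans :: "nat \<Rightarrow> tensor \<Rightarrow> tensor" where
  "ttrans n3 A = (\<lambda>i j k. A j i ((n3 - k) mod n3))"

definition tid :: tensor where
  "tid = (\<lambda>i j k. if i = j \<and> k = 0 then 1 else 0)"

definition tfro :: "nat \<Rightarrow> nat \<Rightarrow> nat \<Rightarrow> tensor \<Rightarrow> real" where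
  "tfro n1 n2 n3 A = sqrt (\<Sum>i<n1. \<Sum>j<n2. \<Sum>k<n3. (A i j k)\<^sup>2)"

definition tstack :: "nat \<Rightarrow> tensor \<Rightarrow> tensor \<Rightarrow> tensor" where
  "tstack n1 L R = (\<lambda>i j k. if i < n1 then L i j k else R (i - n1) j k)"

definition fdiag_nonneg :: "nat \<Rightarrow> nat \<Rightarrow> tensor \<Rightarrow> bool" where
  "fdiag_nonneg r n3 S \<longleftrightarrow> (\<forall>k<n3. \<forall>i<r. \<forall>j<r.
      (i \<noteq> j \<longrightarrow> tdft n3 S i j k = 0) \<and>
      (i = j \<longrightarrow> Im (tdft n3 S i i k) = 0 \<and> Re (tdft n3 S i i k) \<ge> 0))"

text \<open>S^(1/2): the (real) tensor whose Fourier slices are the entrywise square roots of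
  those of S (via the inverse DFT; for S as above the inverse DFT is real).\<close>
definition tsqrt :: "nat \<Rightarrow> tensor \<Rightarrow> tensor" where
  "tsqrt n3 S = (\<lambda>i j t. Re ((1 / of_nat n3) *
      (\<Sum>k<n3. complex_of_real (sqrt (Re (tdft n3 S i j k))) * cis (2 * pi * real k * real t / real n3))))"

definition tubal_rank :: "nat \<Rightarrow> nat \<Rightarrow> nat \<Rightarrow> tensor \<Rightarrow> nat" where
  "tubal_rank n1 n2 n3 A =
     Max ((\<lambda>k. vec_space.rank n1 (mat n1 n2 (\<lambda>(i, j). tdft n3 A i j k))) ` {..<n3})"

end

theory Submission
  imports Defs
begin

lemma modint: "b \<le> n \<Longrightarrow> int ((a + n - b) mod n) = (int a - int b) mod int n"
proof -
  assume "b \<le> n"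
  have "int ((a + n - b) mod n) = (int a + int n - int b) mod int n"
    using \<open>b \<le> n\<close> by (simp add: zmod_int of_nat_diff)
  also have "int a + int n - int b = (int a - int b) + int n" by simp
  finally show ?thesis by simp
qed

definition E :: "nat \<Rightarrow> int \<Rightarrow> complex" where
  "E n m = cis (2 * pi * of_int m / real n)"

lemma E_add: "E n (a + b) = E n a * E n b"
  by (simp add: E_def cis_mult add_divide_distrib distrib_left)

lemma E_mult_n: "n > 0 \<Longrightarrow> E n (int n * q) = 1"
proof -
  assume "n > 0"
  have "2 * pi * of_int (int n * q) / real n = 2 * pi * of_int q" using \<open>n>0\<close> by simp
  then show ?thesis by (simp add: E_def)
qed

lemma E_cong: "n > 0 \<Longrightarrow> a mod int n = b mod int n \<Longrightarrow> E n a = E n b"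
proof -
  assume n: "n > 0" and h: "a mod int n = b mod int n"
  then have "int n dvd a - b" by (simp add: mod_eq_dvd_iff)
  then obtain q where q: "a - b = int n * q" by (auto simp: dvd_def)
  then have "a = b + int n * q" by simp
  then show ?thesis using E_add E_mult_n[OF n] by simp
qed

lemma E_pow: "E n (int p * m) = E n m ^ p"
proof -
  have "2 * pi * of_int (int p * m) / real n = real p * (2 * pi * of_int m / real n)" by simp
  moreover have "E n m ^ p = cis (real p * (2 * pi * of_int m / real n))"
    unfolding E_def by (rule Complex.DeMoivre)
  ultimately show ?thesis by (simp add: E_def mult_ac)
qed

lemma E_sum: "n > 0 \<Longrightarrow> (\<Sum>p<n. E n (int p * m)) = (if int n dvd m then of_nat n else 0)"
proof -
  assume n: "n > 0"
  define w where "w = E n m"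
  have s: "(\<Sum>p<n. E n (int p * m)) = (\<Sum>p<n. w ^ p)" by (simp add: E_pow w_def)
  show ?thesis
  proof (cases "int n dvd m")
    case True
    then obtain q where "m = int n * q" by (auto simp: dvd_def)
    then have "w = 1" using E_mult_n[OF n] by (simp add: w_def)
    then show ?thesis using s True by simp
  next
    case False
    have "w \<noteq> 1"
    proof
      assume "w = 1"
      then have "cos (2 * pi * of_int m / real n) = 1" by (simp add: w_def E_def complex_eq_iff)
      then obtain k :: int where k: "2 * pi * of_int m / real n = of_int k * 2 * pi"
        by (auto simp: cos_one_2pi_int)
      then have "real_of_int m = of_int k * real n" using n by (simp add: field_simps)
      then have "m = k * int n" by (metis of_int_eq_iff of_int_mult of_int_of_nat_eq)
      then show False using False by simp
    qed
    have "w ^ n = E n (int n * m)" by (simp add: E_pow w_def)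
    also have "\<dots> = 1" using E_mult_n[OF n] .
    finally have "w ^ n = 1" .
    then have "(\<Sum>p<n. w ^ p) = 0" using \<open>w \<noteq> 1\<close> by (simp add: geometric_sum)
    then show ?thesis using s False by simp
  qed
qed

lemma tdft_E: "tdft n A i j k = (\<Sum>t<n. complex_of_real (A i j t) * E n (- (int k * int t)))"
  unfolding tdft_def E_def by (intro sum.cong refl) (simp add: mult.assoc)

lemma inversion:
  assumes n: "n > 0" and t0: "t0 < n"
  shows "(\<Sum>k<n. (\<Sum>t<n. complex_of_real (f t) * E n (- (int k * int t))) * E n (int k * int t0))
         = of_nat n * complex_of_real (f t0)"
proof -
  have "(\<Sum>k<n. (\<Sum>t<n. complex_of_real (f t) * E n (- (int k * int t))) * E n (int k * int t0))
      = (\<Sum>k<n. \<Sum>t<n. complex_of_real (f t) * (E n (- (int k * int t)) * E n (int k * int t0)))"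
    by (simp add: sum_distrib_right mult.assoc)
  also have "\<dots> = (\<Sum>k<n. \<Sum>t<n. complex_of_real (f t) * E n (int k * (int t0 - int t)))"
  proof -
    have "\<And>k t. E n (- (int k * int t)) * E n (int k * int t0) = E n (int k * (int t0 - int t))"
      by (simp add: E_add[symmetric] algebra_simps)
    then show ?thesis by simp
  qed
  also have "\<dots> = (\<Sum>t<n. complex_of_real (f t) * (\<Sum>k<n. E n (int k * (int t0 - int t))))"
    by (subst sum.swap) (simp add: sum_distrib_left)
  also have "\<dots> = (\<Sum>t<n. if t = t0 then of_nat n * complex_of_real (f t) else 0)"
  proof (intro sum.cong refl)
    fix t assume "t \<in> {..<n}"
    then have tn: "t < n" by simp
    have "int n dvd (int t0 - int t) \<longleftrightarrow> t = t0"
    proof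
      assume "int n dvd (int t0 - int t)"
      then obtain q where q: "int t0 - int t = int n * q" by (auto simp: dvd_def)
      have "q = 0"
      proof (rule ccontr)
        assume "q \<noteq> 0"
        then have "\<bar>int n * q\<bar> \<ge> int n" by (simp add: abs_mult) (metis abs_ge_zero mult_le_cancel_left1 of_nat_0_le_iff zero_less_abs_iff int_one_le_iff_zero_less mult.commute mult_le_cancel_left2 not_le)
        then show False using q tn t0 by linarith
      qed
      then show "t = t0" using q by simp
    qed simp
    then show "complex_of_real (f t) * (\<Sum>k<n. E n (int k * (int t0 - int t))) =
          (if t = t0 then of_nat n * complex_of_real (f t) else 0)"
      using E_sum[OF n, of "int t0 - int t"] by auto
  qed
  also have "\<dots> = of_nat n * complex_of_real (f t0)" using t0 by (simp add: sum.delta)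
  finally show ?thesis .
qed


lemma modint0: "b \<le> n \<Longrightarrow> int ((n - b) mod n) = (- int b) mod int n"
  using modint[of b n 0] by simp

lemma flip_inv: "(p::nat) < n \<Longrightarrow> (n - (n - p) mod n) mod n = p"
  by (cases "p = 0") auto

lemma sum_flip: "(\<Sum>p<(n::nat). h ((n - p) mod n)) = (\<Sum>p<n. (h p :: 'a::comm_monoid_add))"
  by (rule sum.reindex_bij_witness[where i="\<lambda>p. (n - p) mod n" and j="\<lambda>p. (n - p) mod n"])
     (auto simp: flip_inv)

lemma E_flip: "n > 0 \<Longrightarrow> p < n \<Longrightarrow> E n (int ((n - p) mod n) * x) = E n (- (int p * x))"
proof -
  assume n: "n>0" and p: "p<n"
  have "int ((n - p) mod n) = (- int p) mod int n" using p by (intro modint0) simp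
  then have "(int ((n - p) mod n) * x) mod int n = ((- int p) mod int n * x) mod int n" by simp
  also have "\<dots> = (- int p * x) mod int n" by (rule mod_mult_left_eq)
  finally have "(int ((n - p) mod n) * x) mod int n = (- int p * x) mod int n" .
  from E_cong[OF n this] show ?thesis by simp
qed

lemma dvd_flip:
  assumes p: "p < n" and q: "q < n"
  shows "int n dvd (int p + int q) \<longleftrightarrow> q = (n - p) mod n"
proof
  assume "int n dvd (int p + int q)"
  then have "n dvd (p + q)" by (metis of_nat_add of_nat_dvd_iff)
  then obtain m where m: "p + q = n * m" by (auto simp: dvd_def)
  have "m < 2"
  proof (rule ccontr)
    assume "\<not> m < 2"
    then have "n * m \<ge> n * 2" by simp
    then show False using m p q by linarith
  qed
  then have "m = 0 \<or> m = 1" by auto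
  then show "q = (n - p) mod n"
  proof
    assume "m = 0" then show ?thesis using m by simp
  next
    assume "m = 1" then have "q = n - p" using m by simp
    moreover have "p > 0" using \<open>m = 1\<close> m q by simp
    ultimately show ?thesis using p by simp
  qed
next
  assume "q = (n - p) mod n"
  then show "int n dvd (int p + int q)"
    by (cases "p = 0") (use p in \<open>auto simp: of_nat_diff\<close>)
qed

lemma cnjE: "cnj (E n m) = E n (- m)" by (simp add: E_def cis_cnj)

lemma tsqrt_offdiag:
  assumes fd: "fdiag_nonneg rs n S" and "i < rs" "j < rs" "i \<noteq> j"
  shows "tsqrt n S i j t = 0"
proof -
  have "\<And>k. k < n \<Longrightarrow> tdft n S i j k = 0" using fd assms unfolding fdiag_nonneg_def by blast
  then show ?thesis unfolding tsqrt_def by simp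
qed

lemma S_offdiag:
  assumes n: "n > 0" and fd: "fdiag_nonneg rs n S" and "i < rs" "j < rs" "i \<noteq> j" and k: "k < n"
  shows "S i j k = 0"
proof -
  have z: "\<And>p. p < n \<Longrightarrow> tdft n S i j p = 0" using fd assms unfolding fdiag_nonneg_def by blast
  have "of_nat n * complex_of_real (S i j k) =
     (\<Sum>p<n. (\<Sum>t<n. complex_of_real (S i j t) * E n (- (int p * int t))) * E n (int p * int k))"
    using inversion[OF n k, of "S i j"] by simp
  also have "\<dots> = (\<Sum>p<n. tdft n S i j p * E n (int p * int k))" by (simp add: tdft_E)
  also have "\<dots> = 0" using z by simp
  finally show ?thesis using n by simp
qed

lemma diag_sq:
  assumes n: "n > 0" and fd: "fdiag_nonneg rs n S" and i: "i < rs" and k: "k < n"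
  shows "(\<Sum>t<n. tsqrt n S i i t * tsqrt n S i i ((n - (k + n - t) mod n) mod n)) = S i i k"
proof -
  define Sh where "Sh p = tdft n S i i p" for p
  define c where "c p = sqrt (Re (Sh p))" for p
  define A where "A t = (1 / of_nat n) * (\<Sum>p<n. complex_of_real (c p) * E n (int p * int t))" for t
  define g where "g p = (n - p) mod n" for p
  define t' where "t' t = (n - (k + n - t) mod n) mod n" for t
  have Sh_re: "Sh p = complex_of_real ((c p)^2)" if "p < n" for p
    using fd that i unfolding fdiag_nonneg_def c_def Sh_def by (auto simp: complex_eq_iff)
  have Sh_flip: "Re (Sh (g p)) = Re (Sh p)" if p: "p < n" for p
  proof -
    have "Sh (g p) = (\<Sum>t<n. complex_of_real (S i i t) * E n (- (int (g p) * int t)))"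
      by (simp add: Sh_def tdft_E)
    also have "\<dots> = (\<Sum>t<n. complex_of_real (S i i t) * E n (int p * int t))"
    proof (intro sum.cong refl)
      fix t
      have "E n (- (int (g p) * int t)) = E n (int p * int t)"
        using E_flip[OF n p, of "- int t"] by (simp add: g_def)
      then show "complex_of_real (S i i t) * E n (- (int (g p) * int t)) =
                 complex_of_real (S i i t) * E n (int p * int t)" by simp
    qed
    also have "\<dots> = cnj (Sh p)" by (simp add: Sh_def tdft_E cnjE)
    finally show ?thesis by simp
  qed
  have c_flip: "c (g p) = c p" if "p < n" for p using Sh_flip[OF that] by (simp add: c_def)
  have A_real: "complex_of_real (Re (A t)) = A t" for t
  proof -
    have "cnj (A t) = (1 / of_nat n) * (\<Sum>p<n. complex_of_real (c p) * E n (- (int p * int t)))"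
      by (simp add: A_def cnjE)
    also have "(\<Sum>p<n. complex_of_real (c p) * E n (- (int p * int t)))
        = (\<Sum>p<n. complex_of_real (c (g p)) * E n (int (g p) * int t))"
      by (intro sum.cong refl) (simp add: c_flip[unfolded g_def] E_flip[OF n] g_def)
    also have "\<dots> = (\<Sum>p<n. complex_of_real (c p) * E n (int p * int t))"
      unfolding g_def by (rule sum_flip)
    finally have "cnj (A t) = A t" by (simp add: A_def)
    then show ?thesis by (auto simp: complex_eq_iff)
  qed
  have tsq: "tsqrt n S i i t = Re (A t)" for t
    unfolding tsqrt_def A_def c_def Sh_def E_def by (simp add: mult.assoc)
  have tc: "E n (int q * int (t' t)) = E n (int q * int t - int q * int k)" if t: "t < n" for q t
  proof -
    have "int ((k + n - t) mod n) = (int k - int t) mod int n" using t by (intro modint) simp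
    moreover have le: "(k + n - t) mod n \<le> n" using n by (simp add: less_imp_le)
    ultimately have "int (t' t) = (- ((int k - int t) mod int n)) mod int n"
      unfolding t'_def using modint0[OF le] by simp
    also have "\<dots> = (int t - int k) mod int n" by (simp add: mod_minus_eq)
    finally have "int (t' t) mod int n = (int t - int k) mod int n" by simp
    then have "(int q * int (t' t)) mod int n = (int q * (int t - int k)) mod int n"
      by (metis mod_mult_right_eq)
    then have "(int q * int (t' t)) mod int n = (int q * int t - int q * int k) mod int n"
      by (simp add: algebra_simps)
    then show ?thesis by (rule E_cong[OF n])
  qed
  have trm: "E n (int p * int t) * E n (int q * int t - int q * int k)
      = E n (- (int q * int k)) * E n (int t * (int p + int q))" for p q t
    by (simp add: E_add[symmetric] algebra_simps)
  have "complex_of_real (\<Sum>t<n. tsqrt n S i i t * tsqrt n S i i (t' t))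
      = (\<Sum>t<n. A t * A (t' t))"
    by (simp add: tsq A_real)
  also have "\<dots> = (\<Sum>t<n. (1 / of_nat n)^2 * ((\<Sum>p<n. complex_of_real (c p) * E n (int p * int t)) *
        (\<Sum>q<n. complex_of_real (c q) * E n (int q * int t - int q * int k))))"
    by (intro sum.cong refl) (simp add: A_def tc power2_eq_square)
  also have "\<dots> = (1 / of_nat n)^2 * (\<Sum>t<n. \<Sum>p<n. \<Sum>q<n.
        complex_of_real (c p * c q) * E n (- (int q * int k)) * E n (int t * (int p + int q)))"
  proof -
    have "\<And>t. (\<Sum>p<n. complex_of_real (c p) * E n (int p * int t)) *
        (\<Sum>q<n. complex_of_real (c q) * E n (int q * int t - int q * int k))
       = (\<Sum>p<n. \<Sum>q<n. complex_of_real (c p * c q) * E n (- (int q * int k)) * E n (int t * (int p + int q)))"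
      by (simp add: sum_product trm[symmetric] mult_ac)
    then show ?thesis by (simp add: sum_distrib_left)
  qed
  also have "(\<Sum>t<n. \<Sum>p<n. \<Sum>q<n.
        complex_of_real (c p * c q) * E n (- (int q * int k)) * E n (int t * (int p + int q)))
      = (\<Sum>p<n. \<Sum>q<n. complex_of_real (c p * c q) * E n (- (int q * int k)) *
           (\<Sum>t<n. E n (int t * (int p + int q))))"
  proof -
    have "(\<Sum>t<n. \<Sum>p<n. \<Sum>q<n.
        complex_of_real (c p * c q) * E n (- (int q * int k)) * E n (int t * (int p + int q)))
      = (\<Sum>p<n. \<Sum>t<n. \<Sum>q<n.
        complex_of_real (c p * c q) * E n (- (int q * int k)) * E n (int t * (int p + int q)))"
      by (rule sum.swap)
    also have "\<dots> = (\<Sum>p<n. \<Sum>q<n. \<Sum>t<n.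
        complex_of_real (c p * c q) * E n (- (int q * int k)) * E n (int t * (int p + int q)))"
      by (rule sum.cong[OF refl]) (rule sum.swap)
    finally show ?thesis by (simp add: sum_distrib_left)
  qed
  also have "\<dots> = (\<Sum>p<n. of_nat n * complex_of_real ((c p)^2) * E n (int p * int k))"
  proof (intro sum.cong refl)
    fix p assume "p \<in> {..<n}"
    then have p: "p < n" by simp
    have gp: "g p < n" using n by (simp add: g_def)
    have "(\<Sum>q<n. complex_of_real (c p * c q) * E n (- (int q * int k)) *
           (\<Sum>t<n. E n (int t * (int p + int q))))
        = (\<Sum>q<n. if q = g p then complex_of_real (c p * c q) * E n (- (int q * int k)) * of_nat n else 0)"
    proof (intro sum.cong refl)
      fix q assume "q \<in> {..<n}"
      then have q: "q < n" by simp
      show "complex_of_real (c p * c q) * E n (- (int q * int k)) *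
           (\<Sum>t<n. E n (int t * (int p + int q))) =
          (if q = g p then complex_of_real (c p * c q) * E n (- (int q * int k)) * of_nat n else 0)"
        using E_sum[OF n, of "int p + int q"] dvd_flip[OF p q] by (simp add: g_def)
    qed
    also have "\<dots> = complex_of_real (c p * c (g p)) * E n (- (int (g p) * int k)) * of_nat n"
      using gp by (simp add: sum.delta)
    also have "\<dots> = of_nat n * complex_of_real ((c p)^2) * E n (int p * int k)"
    proof -
      have "E n (- (int (g p) * int k)) = E n (int p * int k)"
        using E_flip[OF n p, of "- int k"] by (simp add: g_def)
      then show ?thesis using c_flip[OF p] by (simp add: power2_eq_square mult_ac)
    qed
    finally show "(\<Sum>q<n. complex_of_real (c p * c q) * E n (- (int q * int k)) *
           (\<Sum>t<n. E n (int t * (int p + int q)))) = of_nat n * complex_of_real ((c p)^2) * E n (int p * int k)" .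
  qed
  also have "(\<Sum>p<n. of_nat n * complex_of_real ((c p)^2) * E n (int p * int k))
      = of_nat n * (\<Sum>p<n. Sh p * E n (int p * int k))"
    by (simp add: sum_distrib_left Sh_re mult.assoc)
  also have "(\<Sum>p<n. Sh p * E n (int p * int k)) = of_nat n * complex_of_real (S i i k)"
    using inversion[OF n k, of "S i i"] by (simp add: Sh_def tdft_E)
  finally have "complex_of_real (\<Sum>t<n. tsqrt n S i i t * tsqrt n S i i (t' t))
      = complex_of_real (S i i k)" using n by (simp add: power2_eq_square)
  then show ?thesis unfolding t'_def by (simp only: of_real_eq_iff)
qed


lemma sqrt_prod:
  assumes n: "n > 0" and fd: "fdiag_nonneg rs n S" and i: "i < rs" and j: "j < rs" and k: "k < n"
  shows "tprod n rs (tsqrt n S) (ttrans n (tsqrt n S)) i j k = S i j k"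
proof -
  have e: "tprod n rs (tsqrt n S) (ttrans n (tsqrt n S)) i j k =
     (\<Sum>l<rs. \<Sum>t<n. tsqrt n S i l t * tsqrt n S j l ((n - (k + n - t) mod n) mod n))"
    by (simp add: tprod_def ttrans_def)
  show ?thesis
  proof (cases "i = j")
    case True
    have "(\<Sum>l<rs. \<Sum>t<n. tsqrt n S i l t * tsqrt n S j l ((n - (k + n - t) mod n) mod n))
      = (\<Sum>l<rs. if l = i then (\<Sum>t<n. tsqrt n S i i t * tsqrt n S i i ((n - (k + n - t) mod n) mod n)) else 0)"
    proof (rule sum.cong[OF refl])
      fix l assume "l \<in> {..<rs}"
      then show "(\<Sum>t<n. tsqrt n S i l t * tsqrt n S j l ((n - (k + n - t) mod n) mod n)) =
        (if l = i then (\<Sum>t<n. tsqrt n S i i t * tsqrt n S i i ((n - (k + n - t) mod n) mod n)) else 0)"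
        using tsqrt_offdiag[OF fd i, of l] True by auto
    qed
    also have "\<dots> = S i i k" using i diag_sq[OF n fd i k] by (simp add: sum.delta)
    finally show ?thesis using e True by simp
  next
    case False
    have "(\<Sum>l<rs. \<Sum>t<n. tsqrt n S i l t * tsqrt n S j l ((n - (k + n - t) mod n) mod n)) = 0"
    proof (rule sum.neutral, rule ballI)
      fix l assume "l \<in> {..<rs}"
      then have l: "l < rs" by simp
      show "(\<Sum>t<n. tsqrt n S i l t * tsqrt n S j l ((n - (k + n - t) mod n) mod n)) = 0"
      proof (cases "l = i")
        case True
        then show ?thesis using tsqrt_offdiag[OF fd j l] False by auto
      next
        case False
        then show ?thesis using tsqrt_offdiag[OF fd i l] by auto
      qed
    qed
    then show ?thesis using e S_offdiag[OF n fd i j False k] by simp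
  qed
qed

lemma sum_pair: "(\<Sum>z\<in>A\<times>B. f z) = (\<Sum>a\<in>A. \<Sum>b\<in>B. (f (a,b) :: 'c::comm_monoid_add))"
  by (simp add: sum.cartesian_product split_def)

definition bc :: "nat \<Rightarrow> tensor \<Rightarrow> nat \<times> nat \<Rightarrow> nat \<times> nat \<Rightarrow> real" where
  "bc n A x y = A (fst x) (fst y) ((snd x + n - snd y) mod n)"

lemma phi_inv: "s < n \<Longrightarrow> v < (n::nat) \<Longrightarrow> (s + n - (s + n - v) mod n) mod n = v"
proof -
  assume s: "s < n" and v: "v < n"
  have le: "(s + n - v) mod n \<le> n" using v by (simp add: less_imp_le)
  have "int ((s + n - (s + n - v) mod n) mod n) = (int s - int ((s + n - v) mod n)) mod int n"
    by (rule modint[OF le])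
  also have "\<dots> = (int s mod int n - (int s - int v) mod int n) mod int n"
    using v by (simp add: modint mod_diff_left_eq)
  also have "\<dots> = (int s - (int s - int v)) mod int n" by (simp add: mod_diff_eq)
  also have "\<dots> = int v" using v by simp
  finally show ?thesis by simp
qed

lemma idx3: "s < n \<Longrightarrow> u < n \<Longrightarrow> a < (n::nat) \<Longrightarrow>
   ((s + n - u) mod n + n - (s + n - a) mod n) mod n = (a + n - u) mod n"
proof -
  assume s: "s < n" and u: "u < n" and a: "a < n"
  have le: "(s + n - a) mod n \<le> n" using a by (simp add: less_imp_le)
  have "int (((s + n - u) mod n + n - (s + n - a) mod n) mod n)
      = (int ((s + n - u) mod n) - int ((s + n - a) mod n)) mod int n"
    by (rule modint[OF le])
  also have "\<dots> = ((int s - int u) mod int n - (int s - int a) mod int n) mod int n"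
    using u a by (simp add: modint)
  also have "\<dots> = ((int s - int u) - (int s - int a)) mod int n" by (simp add: mod_diff_eq)
  also have "\<dots> = (int a - int u) mod int n" by simp
  also have "\<dots> = int ((a + n - u) mod n)" using u by (simp add: modint)
  finally show ?thesis by simp
qed

lemma idx_tr: "s < n \<Longrightarrow> u < (n::nat) \<Longrightarrow> (n - (s + n - u) mod n) mod n = (u + n - s) mod n"
proof -
  assume s: "s < n" and u: "u < n"
  have le: "(s + n - u) mod n \<le> n" using u by (simp add: less_imp_le)
  have "int ((n - (s + n - u) mod n) mod n) = (- int ((s + n - u) mod n)) mod int n"
    by (rule modint0[OF le])
  also have "\<dots> = (- ((int s - int u) mod int n)) mod int n" using u by (simp add: modint)
  also have "\<dots> = (int u - int s) mod int n" by (simp add: mod_minus_eq)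
  also have "\<dots> = int ((u + n - s) mod n)" using s by (simp add: modint)
  finally show ?thesis by simp
qed

lemma sum_shift: "s < n \<Longrightarrow> (\<Sum>u<n. f ((s + n - u) mod n)) = (\<Sum>k<(n::nat). (f k :: 'a::comm_monoid_add))"
  by (rule sum.reindex_bij_witness[where i="\<lambda>u. (s + n - u) mod n" and j="\<lambda>u. (s + n - u) mod n"])
     (auto simp: phi_inv)

lemma bc_prod:
  assumes n: "n > 0" and x: "snd x < n" and y: "snd y < n"
  shows "bc n (tprod n m A B) x y = (\<Sum>z\<in>{..<m}\<times>{..<n}. bc n A x z * bc n B z y)"
proof -
  obtain i s where xs: "x = (i, s)" by (cases x)
  obtain j u where ys: "y = (j, u)" by (cases y)
  have s: "s < n" and u: "u < n" using x y xs ys by auto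
  have "(\<Sum>z\<in>{..<m}\<times>{..<n}. bc n A x z * bc n B z y)
     = (\<Sum>l<m. \<Sum>v<n. A i l ((s + n - v) mod n) * B l j ((v + n - u) mod n))"
    by (simp add: sum_pair bc_def xs ys)
  also have "\<dots> = (\<Sum>l<m. \<Sum>t<n. A i l t * B l j (((s + n - u) mod n + n - t) mod n))"
  proof (rule sum.cong[OF refl])
    fix l
    have "(\<Sum>v<n. A i l ((s + n - v) mod n) * B l j ((v + n - u) mod n))
       = (\<Sum>v<n. (\<lambda>t. A i l t * B l j (((s + n - u) mod n + n - t) mod n)) ((s + n - v) mod n))"
      by (intro sum.cong refl) (simp add: idx3[OF s u])
    also have "\<dots> = (\<Sum>t<n. A i l t * B l j (((s + n - u) mod n + n - t) mod n))"
      by (rule sum_shift[OF s])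
    finally show "(\<Sum>v<n. A i l ((s + n - v) mod n) * B l j ((v + n - u) mod n))
       = (\<Sum>t<n. A i l t * B l j (((s + n - u) mod n + n - t) mod n))" .
  qed
  also have "\<dots> = bc n (tprod n m A B) x y" by (simp add: bc_def tprod_def xs ys)
  finally show ?thesis by simp
qed

lemma bc_trans:
  assumes "snd x < n" and "snd y < n"
  shows "bc n (ttrans n A) x y = bc n A y x"
  using assms idx_tr[of "snd x" n "snd y"] by (simp add: bc_def ttrans_def)

lemma bc_fro:
  assumes n: "n > 0"
  shows "(\<Sum>x\<in>{..<a}\<times>{..<n}. \<Sum>y\<in>{..<b}\<times>{..<n}. (bc n A x y)^2)
       = real n * (\<Sum>i<a. \<Sum>j<b. \<Sum>k<n. (A i j k)^2)"
proof -
  have "(\<Sum>x\<in>{..<a}\<times>{..<n}. \<Sum>y\<in>{..<b}\<times>{..<n}. (bc n A x y)^2)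
      = (\<Sum>i<a. \<Sum>s<n. \<Sum>j<b. \<Sum>u<n. (A i j ((s + n - u) mod n))^2)"
    by (simp add: sum_pair bc_def)
  also have "\<dots> = (\<Sum>i<a. \<Sum>s<n. \<Sum>j<b. \<Sum>k<n. (A i j k)^2)"
  proof (rule sum.cong[OF refl], rule sum.cong[OF refl], rule sum.cong[OF refl])
    fix i s j assume "i \<in> {..<a}" "s \<in> {..<n}" "j \<in> {..<b}"
    then show "(\<Sum>u<n. (A i j ((s + n - u) mod n))^2) = (\<Sum>k<n. (A i j k)^2)"
      using sum_shift[of s n "\<lambda>k. (A i j k)^2"] by simp
  qed
  also have "\<dots> = (\<Sum>i<a. real n * (\<Sum>j<b. \<Sum>k<n. (A i j k)^2))" by simp
  also have "\<dots> = real n * (\<Sum>i<a. \<Sum>j<b. \<Sum>k<n. (A i j k)^2)" by (simp add: sum_distrib_left)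
  finally show ?thesis .
qed


lemma swap3: "(\<Sum>x\<in>X. \<Sum>w\<in>W. \<Sum>v\<in>V. G x w v) = (\<Sum>w\<in>W. \<Sum>v\<in>V. \<Sum>x\<in>X. (G x w v :: real))"
proof -
  have "(\<Sum>x\<in>X. \<Sum>w\<in>W. \<Sum>v\<in>V. G x w v) = (\<Sum>w\<in>W. \<Sum>x\<in>X. \<Sum>v\<in>V. G x w v)"
    by (rule sum.swap)
  also have "\<dots> = (\<Sum>w\<in>W. \<Sum>v\<in>V. \<Sum>x\<in>X. G x w v)"
    by (rule sum.cong[OF refl]) (rule sum.swap)
  finally show ?thesis .
qed

lemma prod_swap: "(\<Sum>z\<in>Z. (\<Sum>w\<in>W. F z w) * (\<Sum>v\<in>V. G z v)) = (\<Sum>w\<in>W. \<Sum>v\<in>V. \<Sum>z\<in>Z. F z w * (G z v :: real))"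
  unfolding sum_product by (rule swap3)

lemma gram:
  "(\<Sum>a\<in>A. \<Sum>b\<in>B. (\<Sum>k\<in>K. f a k * g b k) * (\<Sum>k'\<in>K'. h a k' * q b k'))
   = (\<Sum>k\<in>K. \<Sum>k'\<in>K'. (\<Sum>a\<in>A. f a k * h a k') * (\<Sum>b\<in>B. g b k * (q b k' :: real)))"
proof -
  have "(\<Sum>a\<in>A. \<Sum>b\<in>B. (\<Sum>k\<in>K. f a k * g b k) * (\<Sum>k'\<in>K'. h a k' * q b k'))
      = (\<Sum>a\<in>A. \<Sum>k\<in>K. \<Sum>k'\<in>K'. \<Sum>b\<in>B. f a k * g b k * (h a k' * q b k'))"
    by (rule sum.cong[OF refl]) (rule prod_swap)
  also have "\<dots> = (\<Sum>k\<in>K. \<Sum>k'\<in>K'. \<Sum>a\<in>A. \<Sum>b\<in>B. f a k * g b k * (h a k' * q b k'))"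
    by (rule swap3)
  also have "\<dots> = (\<Sum>k\<in>K. \<Sum>k'\<in>K'. (\<Sum>a\<in>A. f a k * h a k') * (\<Sum>b\<in>B. g b k * q b k'))"
    by (simp add: sum_product mult_ac)
  finally show ?thesis .
qed

lemma sq_expand:
  "(\<Sum>a\<in>A. \<Sum>b\<in>B. (X a b - Y a b)^2)
   = (\<Sum>a\<in>A. \<Sum>b\<in>B. X a b * X a b) - 2 * (\<Sum>a\<in>A. \<Sum>b\<in>B. X a b * Y a b)
     + (\<Sum>a\<in>A. \<Sum>b\<in>B. Y a b * (Y a b :: real))"
proof -
  have "\<And>a b. (X a b - Y a b)^2 = X a b * X a b - 2 * (X a b * Y a b) + Y a b * Y a b"
    by (simp add: power2_eq_square algebra_simps)
  then show ?thesis by (simp add: sum.distrib sum_subtractf sum_distrib_left)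
qed

lemma key:
  fixes L :: "'a \<Rightarrow> 'k \<Rightarrow> real" and R :: "'b \<Rightarrow> 'k \<Rightarrow> real"
    and P :: "'a \<Rightarrow> 'm \<Rightarrow> real" and Q :: "'b \<Rightarrow> 'm \<Rightarrow> real"
  assumes bal: "\<And>k k2. k \<in> K \<Longrightarrow> k2 \<in> K \<Longrightarrow> (\<Sum>a\<in>IA. L a k * L a k2) = (\<Sum>b\<in>IB. R b k * R b k2)"
    and bals: "\<And>k k2. k \<in> K' \<Longrightarrow> k2 \<in> K' \<Longrightarrow> (\<Sum>a\<in>IA. P a k * P a k2) = (\<Sum>b\<in>IB. Q b k * Q b k2)"
  shows "(\<Sum>a\<in>IA. \<Sum>a2\<in>IA. ((\<Sum>k\<in>K. L a k * L a2 k) - (\<Sum>k\<in>K'. P a k * P a2 k))^2)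
       + (\<Sum>b\<in>IB. \<Sum>b2\<in>IB. ((\<Sum>k\<in>K. R b k * R b2 k) - (\<Sum>k\<in>K'. Q b k * Q b2 k))^2)
       \<le> 2 * (\<Sum>a\<in>IA. \<Sum>b\<in>IB. ((\<Sum>k\<in>K. L a k * R b k) - (\<Sum>k\<in>K'. P a k * Q b k))^2)"
proof -
  define GLL where "GLL k k2 = (\<Sum>a\<in>IA. L a k * L a k2)" for k k2
  define GPP where "GPP k k2 = (\<Sum>a\<in>IA. P a k * P a k2)" for k k2
  define GLP where "GLP k k2 = (\<Sum>a\<in>IA. L a k * P a k2)" for k k2
  define GRR where "GRR k k2 = (\<Sum>b\<in>IB. R b k * R b k2)" for k k2
  define GQQ where "GQQ k k2 = (\<Sum>b\<in>IB. Q b k * Q b k2)" for k k2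
  define GRQ where "GRQ k k2 = (\<Sum>b\<in>IB. R b k * Q b k2)" for k k2
  define A where "A = (\<Sum>k\<in>K. \<Sum>k2\<in>K. GLL k k2 * GLL k k2)"
  define B where "B = (\<Sum>k\<in>K'. \<Sum>k2\<in>K'. GPP k k2 * GPP k k2)"
  define C1 where "C1 = (\<Sum>k\<in>K. \<Sum>k2\<in>K'. GLP k k2 * GLP k k2)"
  define C2 where "C2 = (\<Sum>k\<in>K. \<Sum>k2\<in>K'. GRQ k k2 * GRQ k k2)"
  define C3 where "C3 = (\<Sum>k\<in>K. \<Sum>k2\<in>K'. GLP k k2 * GRQ k k2)"
  have RR: "(\<Sum>k\<in>K. \<Sum>k2\<in>K. GRR k k2 * GRR k k2) = A"
    unfolding A_def by (intro sum.cong refl) (simp add: GRR_def GLL_def bal)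
  have LR: "(\<Sum>k\<in>K. \<Sum>k2\<in>K. GLL k k2 * GRR k k2) = A"
    unfolding A_def by (intro sum.cong refl) (simp add: GRR_def GLL_def bal)
  have QQ: "(\<Sum>k\<in>K'. \<Sum>k2\<in>K'. GQQ k k2 * GQQ k k2) = B"
    unfolding B_def by (intro sum.cong refl) (simp add: GQQ_def GPP_def bals)
  have PQ: "(\<Sum>k\<in>K'. \<Sum>k2\<in>K'. GPP k k2 * GQQ k k2) = B"
    unfolding B_def by (intro sum.cong refl) (simp add: GQQ_def GPP_def bals)
  have g1: "(\<Sum>a\<in>IA. \<Sum>b\<in>IA. (\<Sum>k\<in>K. L a k * L b k) * (\<Sum>k\<in>K. L a k * L b k)) = A"
    unfolding A_def GLL_def by (rule gram)
  have g2: "(\<Sum>a\<in>IA. \<Sum>b\<in>IA. (\<Sum>k\<in>K. L a k * L b k) * (\<Sum>k\<in>K'. P a k * P b k)) = C1"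
    unfolding C1_def GLP_def by (rule gram)
  have g3: "(\<Sum>a\<in>IA. \<Sum>b\<in>IA. (\<Sum>k\<in>K'. P a k * P b k) * (\<Sum>k\<in>K'. P a k * P b k)) = B"
    unfolding B_def GPP_def by (rule gram)
  have h1: "(\<Sum>a\<in>IB. \<Sum>b\<in>IB. (\<Sum>k\<in>K. R a k * R b k) * (\<Sum>k\<in>K. R a k * R b k)) = A"
    unfolding RR[symmetric] GRR_def by (rule gram)
  have h2: "(\<Sum>a\<in>IB. \<Sum>b\<in>IB. (\<Sum>k\<in>K. R a k * R b k) * (\<Sum>k\<in>K'. Q a k * Q b k)) = C2"
    unfolding C2_def GRQ_def by (rule gram)
  have h3: "(\<Sum>a\<in>IB. \<Sum>b\<in>IB. (\<Sum>k\<in>K'. Q a k * Q b k) * (\<Sum>k\<in>K'. Q a k * Q b k)) = B"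
    unfolding QQ[symmetric] GQQ_def by (rule gram)
  have k1: "(\<Sum>a\<in>IA. \<Sum>b\<in>IB. (\<Sum>k\<in>K. L a k * R b k) * (\<Sum>k\<in>K. L a k * R b k)) = A"
    unfolding LR[symmetric] GLL_def GRR_def by (rule gram)
  have k2: "(\<Sum>a\<in>IA. \<Sum>b\<in>IB. (\<Sum>k\<in>K. L a k * R b k) * (\<Sum>k\<in>K'. P a k * Q b k)) = C3"
    unfolding C3_def GLP_def GRQ_def by (rule gram)
  have k3: "(\<Sum>a\<in>IA. \<Sum>b\<in>IB. (\<Sum>k\<in>K'. P a k * Q b k) * (\<Sum>k\<in>K'. P a k * Q b k)) = B"
    unfolding PQ[symmetric] GPP_def GQQ_def by (rule gram)
  have e11: "(\<Sum>a\<in>IA. \<Sum>a2\<in>IA. ((\<Sum>k\<in>K. L a k * L a2 k) - (\<Sum>k\<in>K'. P a k * P a2 k))^2)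
     = A - 2 * C1 + B"
    by (simp only: sq_expand g1 g2 g3)
  have e22: "(\<Sum>b\<in>IB. \<Sum>b2\<in>IB. ((\<Sum>k\<in>K. R b k * R b2 k) - (\<Sum>k\<in>K'. Q b k * Q b2 k))^2)
     = A - 2 * C2 + B"
    by (simp only: sq_expand h1 h2 h3)
  have e12: "(\<Sum>a\<in>IA. \<Sum>b\<in>IB. ((\<Sum>k\<in>K. L a k * R b k) - (\<Sum>k\<in>K'. P a k * Q b k))^2)
     = A - 2 * C3 + B"
    by (simp only: sq_expand k1 k2 k3)
  have "(\<Sum>k\<in>K. \<Sum>k2\<in>K'. (GLP k k2 - GRQ k k2)^2) = C1 - 2 * C3 + C2"
    unfolding C1_def C2_def C3_def by (rule sq_expand)
  moreover have "0 \<le> (\<Sum>k\<in>K. \<Sum>k2\<in>K'. (GLP k k2 - GRQ k k2)^2)"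
    by (intro sum_nonneg) simp
  ultimately show ?thesis using e11 e22 e12 by linarith
qed


lemma sum_split: "(\<Sum>i<(a::nat)+(b::nat). f i) = (\<Sum>i<a. f i) + (\<Sum>i<b. (f (a+i) :: real))"
  by (induct b) (simp_all add: add_ac)

lemma stack_prod:
  "tprod n m (tstack n1 A B) (ttrans n (tstack n1 C D)) i j k =
    (if i < n1 then (if j < n1 then tprod n m A (ttrans n C) i j k else tprod n m A (ttrans n D) i (j - n1) k)
     else (if j < n1 then tprod n m B (ttrans n C) (i - n1) j k else tprod n m B (ttrans n D) (i - n1) (j - n1) k))"
  by (simp add: tprod_def ttrans_def tstack_def)

lemma bc_teq: "teq a b n A B \<Longrightarrow> fst x < a \<Longrightarrow> fst y < b \<Longrightarrow> n > 0 \<Longrightarrow> bc n A x y = bc n B x y"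
  by (simp add: teq_def bc_def)

lemma bc_at: "k < n \<Longrightarrow> bc n A (i, k) (j, 0) = A i j k"
  by (simp add: bc_def)

lemma gram_bc:
  assumes n: "n > 0" and k: "snd k < n" and k2: "snd k2 < n"
  shows "(\<Sum>x\<in>{..<m}\<times>{..<n}. bc n A x k * bc n A x k2) = bc n (tprod n m (ttrans n A) A) k k2"
  using bc_prod[OF n k k2, of m "ttrans n A" A] bc_trans[OF k] by (auto intro!: sum.cong)

lemma block:
  assumes n: "n > 0"
  shows "real n * (\<Sum>i<a. \<Sum>j<b. \<Sum>k<n. (tprod n r P (ttrans n Q) i j k - tprod n m P' (ttrans n Q') i j k)^2)
    = (\<Sum>x\<in>{..<a}\<times>{..<n}. \<Sum>y\<in>{..<b}\<times>{..<n}.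
        ((\<Sum>z\<in>{..<r}\<times>{..<n}. bc n P x z * bc n Q y z) - (\<Sum>z\<in>{..<m}\<times>{..<n}. bc n P' x z * bc n Q' y z))^2)"
proof -
  define D where "D = (\<lambda>i j k. tprod n r P (ttrans n Q) i j k - tprod n m P' (ttrans n Q') i j k)"
  have "real n * (\<Sum>i<a. \<Sum>j<b. \<Sum>k<n. (D i j k)^2)
      = (\<Sum>x\<in>{..<a}\<times>{..<n}. \<Sum>y\<in>{..<b}\<times>{..<n}. (bc n D x y)^2)"
    using bc_fro[OF n, where a=a and b=b and A=D] by simp
  also have "\<dots> = (\<Sum>x\<in>{..<a}\<times>{..<n}. \<Sum>y\<in>{..<b}\<times>{..<n}.
        ((\<Sum>z\<in>{..<r}\<times>{..<n}. bc n P x z * bc n Q y z) - (\<Sum>z\<in>{..<m}\<times>{..<n}. bc n P' x z * bc n Q' y z))^2)"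
  proof (rule sum.cong[OF refl], rule sum.cong[OF refl])
    fix x y assume x: "x \<in> {..<a}\<times>{..<n}" and y: "y \<in> {..<b}\<times>{..<n}"
    then have xn: "snd x < n" and yn: "snd y < n" by auto
    have "bc n D x y = bc n (tprod n r P (ttrans n Q)) x y - bc n (tprod n m P' (ttrans n Q')) x y"
      by (simp add: bc_def D_def)
    also have "bc n (tprod n r P (ttrans n Q)) x y = (\<Sum>z\<in>{..<r}\<times>{..<n}. bc n P x z * bc n Q y z)"
      using bc_prod[OF n xn yn] bc_trans[OF _ yn] by (auto intro!: sum.cong)
    also have "bc n (tprod n m P' (ttrans n Q')) x y = (\<Sum>z\<in>{..<m}\<times>{..<n}. bc n P' x z * bc n Q' y z)"
      using bc_prod[OF n xn yn] bc_trans[OF _ yn] by (auto intro!: sum.cong)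
    finally show "(bc n D x y)^2 = ((\<Sum>z\<in>{..<r}\<times>{..<n}. bc n P x z * bc n Q y z) - (\<Sum>z\<in>{..<m}\<times>{..<n}. bc n P' x z * bc n Q' y z))^2"
      by simp
  qed
  finally show ?thesis unfolding D_def .
qed

lemma gram_fact:
  assumes n: "n > 0" and k: "snd k < n" and k2: "snd k2 < n"
  shows "(\<Sum>a\<in>{..<m}\<times>{..<n}. bc n (tprod n p U T) a k * bc n (tprod n p U T) a k2)
    = (\<Sum>w\<in>{..<p}\<times>{..<n}. \<Sum>w'\<in>{..<p}\<times>{..<n}. bc n T w k * bc n T w' k2 * bc n (tprod n m (ttrans n U) U) w w')"
proof -
  have "(\<Sum>a\<in>{..<m}\<times>{..<n}. bc n (tprod n p U T) a k * bc n (tprod n p U T) a k2)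
     = (\<Sum>a\<in>{..<m}\<times>{..<n}. (\<Sum>w\<in>{..<p}\<times>{..<n}. bc n U a w * bc n T w k) * (\<Sum>w'\<in>{..<p}\<times>{..<n}. bc n U a w' * bc n T w' k2))"
    using bc_prod[OF n _ k] bc_prod[OF n _ k2] by (auto intro!: sum.cong)
  also have "\<dots> = (\<Sum>w\<in>{..<p}\<times>{..<n}. \<Sum>w'\<in>{..<p}\<times>{..<n}. \<Sum>a\<in>{..<m}\<times>{..<n}.
       (bc n U a w * bc n T w k) * (bc n U a w' * bc n T w' k2))"
    by (rule prod_swap)
  also have "\<dots> = (\<Sum>w\<in>{..<p}\<times>{..<n}. \<Sum>w'\<in>{..<p}\<times>{..<n}. bc n T w k * bc n T w' k2 *
       (\<Sum>a\<in>{..<m}\<times>{..<n}. bc n U a w * bc n U a w'))"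
    by (simp add: sum_distrib_left mult_ac)
  also have "\<dots> = (\<Sum>w\<in>{..<p}\<times>{..<n}. \<Sum>w'\<in>{..<p}\<times>{..<n}. bc n T w k * bc n T w' k2 * bc n (tprod n m (ttrans n U) U) w w')"
    using gram_bc[OF n] by (auto intro!: sum.cong)
  finally show ?thesis .
qed

lemma xs_fact:
  assumes n: "n > 0" and x: "snd x < n" and y: "snd y < n"
  shows "bc n (tprod n p (tprod n p U T) (ttrans n (tprod n p V T))) x y
    = (\<Sum>w\<in>{..<p}\<times>{..<n}. \<Sum>w'\<in>{..<p}\<times>{..<n}. bc n U x w * bc n V y w' * bc n (tprod n p T (ttrans n T)) w w')"
proof -
  have "bc n (tprod n p (tprod n p U T) (ttrans n (tprod n p V T))) x y
     = (\<Sum>z\<in>{..<p}\<times>{..<n}. bc n (tprod n p U T) x z * bc n (tprod n p V T) y z)"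
    using bc_prod[OF n x y] bc_trans[OF _ y] by (auto intro!: sum.cong)
  also have "\<dots> = (\<Sum>z\<in>{..<p}\<times>{..<n}. (\<Sum>w\<in>{..<p}\<times>{..<n}. bc n U x w * bc n T w z) * (\<Sum>w'\<in>{..<p}\<times>{..<n}. bc n V y w' * bc n T w' z))"
    using bc_prod[OF n x] bc_prod[OF n y] by (auto intro!: sum.cong)
  also have "\<dots> = (\<Sum>w\<in>{..<p}\<times>{..<n}. \<Sum>w'\<in>{..<p}\<times>{..<n}. \<Sum>z\<in>{..<p}\<times>{..<n}.
       (bc n U x w * bc n T w z) * (bc n V y w' * bc n T w' z))"
    by (rule prod_swap)
  also have "\<dots> = (\<Sum>w\<in>{..<p}\<times>{..<n}. \<Sum>w'\<in>{..<p}\<times>{..<n}. bc n U x w * bc n V y w' *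
       (\<Sum>z\<in>{..<p}\<times>{..<n}. bc n T w z * bc n T w' z))"
    by (simp add: sum_distrib_left mult_ac)
  also have "\<dots> = (\<Sum>w\<in>{..<p}\<times>{..<n}. \<Sum>w'\<in>{..<p}\<times>{..<n}. bc n U x w * bc n V y w' * bc n (tprod n p T (ttrans n T)) w w')"
  proof -
    have "\<And>w w'. snd w < n \<Longrightarrow> snd w' < n \<Longrightarrow>
        (\<Sum>z\<in>{..<p}\<times>{..<n}. bc n T w z * bc n T w' z) = bc n (tprod n p T (ttrans n T)) w w'"
      using bc_prod[OF n] bc_trans by (auto intro!: sum.cong)
    then show ?thesis by (auto intro!: sum.cong)
  qed
  finally show ?thesis .
qed

lemma xs_fact2:
  assumes n: "n > 0" and x: "snd x < n" and y: "snd y < n"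
  shows "bc n (tprod n p (tprod n p U S) (ttrans n V)) x y
    = (\<Sum>w\<in>{..<p}\<times>{..<n}. \<Sum>w'\<in>{..<p}\<times>{..<n}. bc n U x w * bc n V y w' * bc n S w w')"
proof -
  have "bc n (tprod n p (tprod n p U S) (ttrans n V)) x y
     = (\<Sum>w'\<in>{..<p}\<times>{..<n}. bc n (tprod n p U S) x w' * bc n V y w')"
    using bc_prod[OF n x y] bc_trans[OF _ y] by (auto intro!: sum.cong)
  also have "\<dots> = (\<Sum>w'\<in>{..<p}\<times>{..<n}. (\<Sum>w\<in>{..<p}\<times>{..<n}. bc n U x w * bc n S w w') * bc n V y w')"
    using bc_prod[OF n x] by (auto intro!: sum.cong)
  also have "\<dots> = (\<Sum>w'\<in>{..<p}\<times>{..<n}. \<Sum>w\<in>{..<p}\<times>{..<n}. bc n U x w * bc n V y w' * bc n S w w')"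
    by (simp add: sum_distrib_left sum_distrib_right mult_ac)
  also have "\<dots> = (\<Sum>w\<in>{..<p}\<times>{..<n}. \<Sum>w'\<in>{..<p}\<times>{..<n}. bc n U x w * bc n V y w' * bc n S w w')"
    by (rule sum.swap)
  finally show ?thesis .
qed


theorem lemma10:
  fixes n1 n2 n3 r rs :: nat and L R Xs U S V :: tensor
  assumes "n3 > 0"
    and "teq r r n3 (tprod n3 n1 (ttrans n3 L) L) (tprod n3 n2 (ttrans n3 R) R)"
    and "teq n1 n2 n3 Xs (tprod n3 rs (tprod n3 rs U S) (ttrans n3 V))"
    and "teq rs rs n3 (tprod n3 n1 (ttrans n3 U) U) tid"
    and "teq rs rs n3 (tprod n3 n2 (ttrans n3 V) V) tid"
    and "fdiag_nonneg rs n3 S"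
    and "tubal_rank n1 n2 n3 Xs = rs"
  shows "tfro (n1 + n2) (n1 + n2) n3
           (\<lambda>i j k. tprod n3 r (tstack n1 L R) (ttrans n3 (tstack n1 L R)) i j k
              - tprod n3 rs (tstack n1 (tprod n3 rs U (tsqrt n3 S)) (tprod n3 rs V (tsqrt n3 S)))
                   (ttrans n3 (tstack n1 (tprod n3 rs U (tsqrt n3 S)) (tprod n3 rs V (tsqrt n3 S)))) i j k)
         \<le> 2 * tfro n1 n2 n3 (\<lambda>i j k. tprod n3 r L (ttrans n3 R) i j k - Xs i j k)"
proof -
  have n: "n3 > 0" using assms(1) .
  define T where "T = tsqrt n3 S"
  define Ls where "Ls = tprod n3 rs U T"
  define Rs where "Rs = tprod n3 rs V T"
  define D where "D = (\<lambda>i j k. tprod n3 r (tstack n1 L R) (ttrans n3 (tstack n1 L R)) i j k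
      - tprod n3 rs (tstack n1 Ls Rs) (ttrans n3 (tstack n1 Ls Rs)) i j k)"
  define B where "B P Q P' Q' a b = (\<Sum>i<a. \<Sum>j<b. \<Sum>k<n3.
      (tprod n3 r P (ttrans n3 Q) i j k - tprod n3 rs P' (ttrans n3 Q') i j k)^2)"
    for P Q P' Q' and a b :: nat
  define M where "M P Q P' Q' a b = (\<Sum>x\<in>{..<a}\<times>{..<n3}. \<Sum>y\<in>{..<b}\<times>{..<n3}.
      ((\<Sum>z\<in>{..<r}\<times>{..<n3}. bc n3 P x z * bc n3 Q y z) - (\<Sum>z\<in>{..<rs}\<times>{..<n3}. bc n3 P' x z * bc n3 Q' y z))^2)"
    for P Q P' Q' and a b :: nat
  have BM: "real n3 * B P Q P' Q' a b = M P Q P' Q' a b" for P Q P' Q' a b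
    unfolding B_def M_def by (rule block[OF n])
  have split: "(\<Sum>i<n1+n2. \<Sum>j<n1+n2. \<Sum>k<n3. (D i j k)^2)
      = (B L L Ls Ls n1 n1 + B L R Ls Rs n1 n2) + (B R L Rs Ls n2 n1 + B R R Rs Rs n2 n2)"
    by (simp add: sum_split sum.distrib D_def stack_prod B_def)
  have M21: "M R L Rs Ls n2 n1 = M L R Ls Rs n1 n2"
    unfolding M_def by (subst sum.swap) (simp add: mult.commute)
  have balL: "(\<Sum>a\<in>{..<n1}\<times>{..<n3}. bc n3 L a k * bc n3 L a k2) = (\<Sum>b\<in>{..<n2}\<times>{..<n3}. bc n3 R b k * bc n3 R b k2)"
    if "k \<in> {..<r}\<times>{..<n3}" "k2 \<in> {..<r}\<times>{..<n3}" for k k2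
  proof -
    have k: "snd k < n3" "fst k < r" and k2: "snd k2 < n3" "fst k2 < r" using that by auto
    show ?thesis
      using gram_bc[OF n k(1) k2(1), where m=n1 and A=L] gram_bc[OF n k(1) k2(1), where m=n2 and A=R]
        bc_teq[OF assms(2) k(2) k2(2) n] by simp
  qed
  have balS: "(\<Sum>a\<in>{..<n1}\<times>{..<n3}. bc n3 Ls a k * bc n3 Ls a k2) = (\<Sum>b\<in>{..<n2}\<times>{..<n3}. bc n3 Rs b k * bc n3 Rs b k2)"
    if "k \<in> {..<rs}\<times>{..<n3}" "k2 \<in> {..<rs}\<times>{..<n3}" for k k2
  proof -
    have k: "snd k < n3" and k2: "snd k2 < n3" using that by auto
    have UV: "bc n3 (tprod n3 n1 (ttrans n3 U) U) w w' = bc n3 (tprod n3 n2 (ttrans n3 V) V) w w'"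
      if "w \<in> {..<rs}\<times>{..<n3}" "w' \<in> {..<rs}\<times>{..<n3}" for w w'
    proof -
      have "fst w < rs" "fst w' < rs" using that by auto
      then show ?thesis using bc_teq[OF assms(4) _ _ n] bc_teq[OF assms(5) _ _ n] by simp
    qed
    show ?thesis unfolding Ls_def Rs_def
      using gram_fact[OF n k k2, where m=n1 and p=rs and U=U and T=T] gram_fact[OF n k k2, where m=n2 and p=rs and U=V and T=T] UV
      by (simp cong: sum.cong)
  qed
  have key': "M L L Ls Ls n1 n1 + M R R Rs Rs n2 n2 \<le> 2 * M L R Ls Rs n1 n2"
    unfolding M_def
    by (rule key[where K="{..<r}\<times>{..<n3}" and K'="{..<rs}\<times>{..<n3}" and IA="{..<n1}\<times>{..<n3}"
          and IB="{..<n2}\<times>{..<n3}" and L="bc n3 L" and R="bc n3 R" and P="bc n3 Ls" and Q="bc n3 Rs",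
          OF balL balS])
  have xs: "tprod n3 rs Ls (ttrans n3 Rs) i j k = Xs i j k" if i: "i < n1" and j: "j < n2" and k: "k < n3" for i j k
  proof -
    have kk: "snd (i, k) < n3" "snd (j, 0::nat) < n3" using k n by auto
    have "Xs i j k = bc n3 Xs (i, k) (j, 0)" by (simp add: bc_at k)
    also have "\<dots> = bc n3 (tprod n3 rs (tprod n3 rs U S) (ttrans n3 V)) (i, k) (j, 0)"
      using bc_teq[OF assms(3) _ _ n, of "(i,k)" "(j,0)"] i j by simp
    also have "\<dots> = (\<Sum>w\<in>{..<rs}\<times>{..<n3}. \<Sum>w'\<in>{..<rs}\<times>{..<n3}. bc n3 U (i,k) w * bc n3 V (j,0) w' * bc n3 S w w')"
      by (rule xs_fact2[OF n kk])
    also have "\<dots> = (\<Sum>w\<in>{..<rs}\<times>{..<n3}. \<Sum>w'\<in>{..<rs}\<times>{..<n3}. bc n3 U (i,k) w * bc n3 V (j,0) w' * bc n3 (tprod n3 rs T (ttrans n3 T)) w w')"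
    proof -
      have "bc n3 S w w' = bc n3 (tprod n3 rs T (ttrans n3 T)) w w'"
        if "w \<in> {..<rs}\<times>{..<n3}" "w' \<in> {..<rs}\<times>{..<n3}" for w w'
      proof -
        have "fst w < rs" "fst w' < rs" using that by auto
        moreover have "(snd w + n3 - snd w') mod n3 < n3" using n by simp
        ultimately show ?thesis unfolding bc_def T_def using sqrt_prod[OF n assms(6)] by simp
      qed
      then show ?thesis by (auto intro!: sum.cong)
    qed
    also have "\<dots> = bc n3 (tprod n3 rs Ls (ttrans n3 Rs)) (i, k) (j, 0)"
      unfolding Ls_def Rs_def by (rule xs_fact[OF n kk, symmetric])
    also have "\<dots> = tprod n3 rs Ls (ttrans n3 Rs) i j k" by (simp add: bc_at k)
    finally show ?thesis by simp
  qed
  have rhs: "tfro n1 n2 n3 (\<lambda>i j k. tprod n3 r L (ttrans n3 R) i j k - Xs i j k) = sqrt (B L R Ls Rs n1 n2)"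
    unfolding tfro_def B_def by (simp add: xs)
  have lhs: "tfro (n1 + n2) (n1 + n2) n3
           (\<lambda>i j k. tprod n3 r (tstack n1 L R) (ttrans n3 (tstack n1 L R)) i j k
              - tprod n3 rs (tstack n1 (tprod n3 rs U (tsqrt n3 S)) (tprod n3 rs V (tsqrt n3 S)))
                   (ttrans n3 (tstack n1 (tprod n3 rs U (tsqrt n3 S)) (tprod n3 rs V (tsqrt n3 S)))) i j k)
      = sqrt (\<Sum>i<n1+n2. \<Sum>j<n1+n2. \<Sum>k<n3. (D i j k)^2)"
    unfolding tfro_def D_def Ls_def Rs_def T_def by simp
  have "real n3 * (\<Sum>i<n1+n2. \<Sum>j<n1+n2. \<Sum>k<n3. (D i j k)^2)
      = (M L L Ls Ls n1 n1 + M L R Ls Rs n1 n2) + (M R L Rs Ls n2 n1 + M R R Rs Rs n2 n2)"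
    unfolding split by (simp add: distrib_left BM)
  also have "\<dots> \<le> 4 * M L R Ls Rs n1 n2" using key' M21 by linarith
  also have "\<dots> = real n3 * (4 * B L R Ls Rs n1 n2)" using BM[of L R Ls Rs n1 n2] by simp
  finally have le: "(\<Sum>i<n1+n2. \<Sum>j<n1+n2. \<Sum>k<n3. (D i j k)^2) \<le> 4 * B L R Ls Rs n1 n2"
    using n by simp
  have "sqrt (\<Sum>i<n1+n2. \<Sum>j<n1+n2. \<Sum>k<n3. (D i j k)^2) \<le> sqrt (4 * B L R Ls Rs n1 n2)"
    using le by (rule real_sqrt_le_mono)
  also have "\<dots> = 2 * sqrt (B L R Ls Rs n1 n2)" by (simp add: real_sqrt_mult)
  finally show ?thesis using lhs rhs by simp
qed

end
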